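(* Let $x\in(0,\tfrac12)$ be irrational. (a) If $B(x)<\infty$, then $B(-x)<\infty$ and $$B^-(x):=\tfrac12\bigl(B(x)-B(-x)\bigr)=\frac{x}{2}\log\frac{1-x}{x}.$$ (b) If the series $W(x)$ converges, then the series $W(-x)$ converges and $$W^+(x):=\tfrac12\bigl(W(x)+W(-x)\bigr)=\frac{x}{2}\log\frac{1-x}{x}-\log(1-x).$$ In particular, since $B^-$ is odd and $1$-periodic and $W^+$ is even and $1$-periodic, $B^-$ and $W^+$ are uniformly bounded on the set of irrationals where they are defined.
   Context: For real $x$ let $\{x\}=x-\lfloor x\rfloor$ and let $A(y)=\{1/y\}$ for $y\in(0,1)$ (Gauss map), with iterates $A^j$, $A^0=\mathrm{id}$, and empty products equal to $1$. For irrational $x$ put $y=\{x\}$ and define $$B(x)=\sum_{j\ge0}\Bigl(\prod_{k=0}^{j-1}A^k(y)\Bigr)\log\frac{1}{A^j(y)}\in[0,+\infty],\qquad W(x)=\sum_{j\ge0}(-1)^j\Bigl(\prod_{k=0}^{j-1}A^k(y)\Bigr)\log\frac{1}{A^j(y)},$$ the latter being said to converge when its partial sums converge. Equivalently, $B$ and $W$ are $1$-periodic and satisfy, for irrational $x\in(0,1)$, $B(x)=-\log x+xB(1/x)$ and $W(x)=-\log x-xW(1/x)$ (with $W(x)$ convergent iff $W(1/x)$ convergent). *)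

theory Defs
  imports "HOL-Analysis.Analysis"
begin

definition gauss :: "real \<Rightarrow> real" where
  "gauss y = frac (1 / y)"

definition B_term :: "real \<Rightarrow> nat \<Rightarrow> real" where
  "B_term x j = (\<Prod>k<j. (gauss ^^ k) (frac x)) * ln (1 / (gauss ^^ j) (frac x))"

definition W_term :: "real \<Rightarrow> nat \<Rightarrow> real" where
  "W_term x j = (-1) ^ j * B_term x j"

text \<open>B(x) as a value in [0,+\<infinity>] (terms are nonnegative for irrational x).\<close>
definition Bfun :: "real \<Rightarrow> ereal" where
  "Bfun x = (\<Sum>j. ereal (B_term x j))"

definition W_converges :: "real \<Rightarrow> bool" where
  "W_converges x \<longleftrightarrow> convergent (\<lambda>n. \<Sum>j<n. W_term x j)"

definition Wfun :: "real \<Rightarrow> real" where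
  "Wfun x = lim (\<lambda>n. \<Sum>j<n. W_term x j)"

definition Bminus :: "real \<Rightarrow> real" where
  "Bminus x = (real_of_ereal (Bfun x) - real_of_ereal (Bfun (-x))) / 2"

definition Wplus :: "real \<Rightarrow> real" where
  "Wplus x = (Wfun x + Wfun (-x)) / 2"

end

theory Submission imports Defs begin

lemma gpow_Suc: "(gauss ^^ Suc k) y = (gauss ^^ k) (gauss y)"
  by (simp add: funpow_Suc_right del: funpow.simps)

lemma orbit_range: "0 \<le> (gauss ^^ k) (frac x) \<and> (gauss ^^ k) (frac x) < 1"
  by (cases k) (auto simp: gauss_def frac_lt_1)

lemma ln_inv_nonneg: "0 \<le> (y::real) \<Longrightarrow> y < 1 \<Longrightarrow> 0 \<le> ln (1 / y)"
proof (cases "y = 0")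
  case False
  assume "0 \<le> y" "y < 1"
  then have "1 \<le> 1 / y" using False by (simp add: le_divide_eq)
  then show ?thesis by simp
qed simp

lemma B_term_nonneg: "0 \<le> B_term x j"
  unfolding B_term_def using orbit_range by (intro mult_nonneg_nonneg prod_nonneg ln_inv_nonneg) auto
lemma Bfun_fin: "Bfun x < \<infinity> \<longleftrightarrow> summable (B_term x)"
proof
  assume "Bfun x < \<infinity>"
  then show "summable (B_term x)" unfolding Bfun_def
    by (intro summable_ereal B_term_nonneg) auto
next
  assume "summable (B_term x)"
  then show "Bfun x < \<infinity>" unfolding Bfun_def
    using suminf_ereal_finite less_ereal.simps top.not_eq_extremum by blast
qed

lemma Bfun_val: "summable (B_term x) \<Longrightarrow> real_of_ereal (Bfun x) = suminf (B_term x)"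
  unfolding Bfun_def by (simp add: suminf_ereal')

lemma Wconv: "W_converges x \<longleftrightarrow> summable (W_term x)"
  unfolding W_converges_def by (simp add: summable_iff_convergent)

lemma Wval: "Wfun x = suminf (W_term x)"
  unfolding Wfun_def by (simp add: suminf_eq_lim)

context fixes x :: real assumes x0: "0 < x" and x1: "x < 1/2"
begin

lemma fracx: "frac x = x" using x0 x1 by (simp add: frac_eq)

lemma fracnx: "frac (-x) = 1 - x"
proof -
  have "floor (-x) = -1" using x0 x1 by (simp add: floor_eq_iff)
  then show ?thesis by (simp add: frac_def)
qed

lemma g1: "gauss (1 - x) = x / (1 - x)"
proof -
  have "floor (1 / (1 - x)) = 1" using x0 x1 by (simp add: floor_eq_iff field_simps)
  then show ?thesis using x0 x1 by (simp add: gauss_def frac_def field_simps)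
qed

lemma g2: "gauss (x / (1 - x)) = gauss x"
proof -
  have "1 / (x / (1 - x)) = 1 / x - 1" using x0 x1 by (simp add: field_simps)
  then show ?thesis by (simp add: gauss_def frac_def)
qed

lemma orb: "(gauss ^^ (k+2)) (frac (-x)) = (gauss ^^ (k+1)) (frac x)"
proof -
  have "k+2 = Suc (Suc k)" "k+1 = Suc k" by simp_all
  then show ?thesis by (simp only: fracnx fracx gpow_Suc g1 g2)
qed

lemma shiftB: "B_term (-x) (j+2) = B_term x (j+1)"
proof -
  have "(\<Prod>k<j+2. (gauss ^^ k) (frac (-x))) = (\<Prod>k<Suc (Suc j). (gauss ^^ k) (frac (-x)))"
    by (simp add: numeral_2_eq_2)
  also have "\<dots> = (gauss ^^ 0) (frac (-x)) * ((gauss ^^ 1) (frac (-x)) * (\<Prod>k<j. (gauss ^^ (Suc (Suc k))) (frac (-x))))"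
    by (simp only: prod.lessThan_Suc_shift One_nat_def)
  also have "\<dots> = (1 - x) * (x / (1-x)) * (\<Prod>k<j. (gauss ^^ (k+2)) (frac (-x)))"
    by (simp add: fracnx g1 numeral_2_eq_2)
  also have "\<dots> = (1 - x) * (x / (1-x)) * (\<Prod>k<j. (gauss ^^ (k+1)) (frac x))" by (simp only: orb)
  also have "\<dots> = x * (\<Prod>k<j. (gauss ^^ (k+1)) (frac x))" using x0 x1 by simp
  also have "\<dots> = (\<Prod>k<j+1. (gauss ^^ k) (frac x))"
    by (simp only: Suc_eq_plus1[symmetric] prod.lessThan_Suc_shift fracx) simp
  finally show ?thesis unfolding B_term_def using orb[of j] by simp
qed

lemma B0: "B_term (-x) 0 = - ln (1 - x)" by (simp add: B_term_def fracnx ln_div)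
lemma B1: "B_term (-x) 1 = (1 - x) * (ln (1 - x) - ln x)"
  using x0 x1 by (simp add: B_term_def fracnx g1 ln_div)
lemma Bx0: "B_term x 0 = - ln x" by (simp add: B_term_def fracx ln_div)

end

lemma partA:
  assumes x0: "0 < x" and x1: "x < 1/2" and fin: "Bfun x < \<infinity>"
  shows "Bfun (-x) < \<infinity> \<and> Bminus x = x / 2 * ln ((1 - x) / x)"
proof -
  have s: "summable (B_term x)" using fin Bfun_fin by blast
  have s1: "summable (\<lambda>j. B_term x (j+1))" using s by (simp only: summable_iff_shift)
  have eq: "(\<lambda>j. B_term (-x) (j+2)) = (\<lambda>j. B_term x (j+1))"
    using shiftB[OF x0 x1] by auto
  have s2: "summable (B_term (-x))"
    using s1 summable_iff_shift[of "B_term (-x)" 2] eq by simp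
  have v1: "suminf (B_term x) = (\<Sum>j. B_term x (j+1)) + B_term x 0"
    using suminf_split_initial_segment[OF s, of 1] by simp
  have v2: "suminf (B_term (-x)) = (\<Sum>j. B_term x (j+1)) + B_term (-x) 0 + B_term (-x) 1"
    using suminf_split_initial_segment[OF s2, of 2] eq by (simp add: numeral_2_eq_2)
  have l: "ln ((1 - x) / x) = ln (1 - x) - ln x" using x0 x1 by (simp add: ln_div)
  have d: "real_of_ereal (Bfun x) - real_of_ereal (Bfun (-x)) = B_term x 0 - B_term (-x) 0 - B_term (-x) 1"
    using Bfun_val[OF s] Bfun_val[OF s2] v1 v2 by simp
  have "Bminus x = (B_term x 0 - B_term (-x) 0 - B_term (-x) 1) / 2"
    unfolding Bminus_def d ..
  also have "\<dots> = x / 2 * ln ((1 - x) / x)"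
    unfolding B0[OF x0 x1] B1[OF x0 x1] Bx0[OF x0 x1] l by (simp add: field_simps)
  finally show ?thesis using s2 Bfun_fin[of "-x"] by simp
qed

lemma partB:
  assumes x0: "0 < x" and x1: "x < 1/2" and cv: "W_converges x"
  shows "W_converges (-x) \<and> Wplus x = x / 2 * ln ((1 - x) / x) - ln (1 - x)"
proof -
  have s: "summable (W_term x)" using cv Wconv by blast
  have s1: "summable (\<lambda>j. - W_term x (j+1))" using s by (intro summable_minus) (simp only: summable_iff_shift)
  have eq: "(\<lambda>j. W_term (-x) (j+2)) = (\<lambda>j. - W_term x (j+1))"
    using shiftB[OF x0 x1] by (auto simp: W_term_def)
  have s2: "summable (W_term (-x))"
    using s1 summable_iff_shift[of "W_term (-x)" 2] eq by simp
  have v1: "suminf (W_term x) = (\<Sum>j. W_term x (j+1)) + W_term x 0"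
    using suminf_split_initial_segment[OF s, of 1] by simp
  have v2: "suminf (W_term (-x)) = (\<Sum>j. - W_term x (j+1)) + W_term (-x) 0 + W_term (-x) 1"
    using suminf_split_initial_segment[OF s2, of 2] eq by (simp add: numeral_2_eq_2)
  have v3: "(\<Sum>j. - W_term x (j+1)) = - (\<Sum>j. W_term x (j+1))"
  proof -
    have "summable (\<lambda>j. W_term x (j+1))" using s by (simp only: summable_iff_shift)
    then show ?thesis by (rule suminf_minus)
  qed
  have l: "ln ((1 - x) / x) = ln (1 - x) - ln x" using x0 x1 by (simp add: ln_div)
  have d: "Wfun x + Wfun (-x) = W_term x 0 + W_term (-x) 0 + W_term (-x) 1"
    using Wval[of x] Wval[of "-x"] v1 v2 v3 by simp
  have "Wplus x = (W_term x 0 + W_term (-x) 0 + W_term (-x) 1) / 2"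
    unfolding Wplus_def d ..
  also have "\<dots> = x / 2 * ln ((1 - x) / x) - ln (1 - x)"
    unfolding W_term_def B0[OF x0 x1] B1[OF x0 x1] Bx0[OF x0 x1] l by (simp add: field_simps)
  finally show ?thesis using s2 Wconv[of "-x"] by simp
qed


lemma Bfun_frac: "frac a = frac b \<Longrightarrow> Bfun a = Bfun b"
  unfolding Bfun_def B_term_def by simp
lemma Wfun_frac: "frac a = frac b \<Longrightarrow> Wfun a = Wfun b"
  unfolding Wfun_def W_term_def B_term_def by simp
lemma Wc_frac: "frac a = frac b \<Longrightarrow> W_converges a = W_converges b"
  unfolding W_converges_def W_term_def B_term_def by simp

lemma frac_irr: "(x::real) \<notin> \<rat> \<Longrightarrow> frac x \<notin> \<rat> \<and> 0 < frac x \<and> frac x \<noteq> 1/2 \<and> x \<notin> \<int>"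
proof -
  assume x: "x \<notin> \<rat>"
  have xi: "x \<notin> \<int>" using x Ints_subset_Rats by blast
  have "frac x \<notin> \<rat>"
  proof
    assume "frac x \<in> \<rat>"
    then have "frac x + of_int \<lfloor>x\<rfloor> \<in> \<rat>" by (intro Rats_add) auto
    then show False using x by (simp add: frac_def)
  qed
  moreover have "(1/2::real) \<in> \<rat>" by simp
  then have "frac x \<noteq> 1/2" using calculation by metis
  ultimately show ?thesis using xi by auto
qed

lemma bound1: "0 < (z::real) \<Longrightarrow> z < 1/2 \<Longrightarrow> 0 \<le> z / 2 * ln ((1 - z) / z) \<and> z / 2 * ln ((1 - z) / z) \<le> 1"
proof -
  assume z0: "0 < z" and z1: "z < 1/2"
  have p: "0 < (1 - z) / z" using z0 z1 by simp
  have "1 \<le> (1 - z) / z" using z0 z1 by (simp add: field_simps)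
  then have a: "0 \<le> ln ((1 - z) / z)" by simp
  have "ln ((1 - z) / z) \<le> (1 - z) / z - 1" using ln_le_minus_one[OF p] .
  then have "z * ln ((1 - z) / z) \<le> z * ((1 - z) / z - 1)" using z0 by (intro mult_left_mono) auto
  also have "\<dots> \<le> 1" using z0 z1 by (simp add: field_simps)
  finally show ?thesis using a z0 by simp
qed

lemma bound2: "0 < (z::real) \<Longrightarrow> z < 1/2 \<Longrightarrow> 0 \<le> - ln (1 - z) \<and> - ln (1 - z) \<le> 1"
proof -
  assume z0: "0 < z" and z1: "z < 1/2"
  have "ln (1 - z) \<le> 0" using z0 z1 by simp
  moreover have "ln (1 / (1 - z)) \<le> 1 / (1 - z) - 1" using z1 by (intro ln_le_minus_one) auto
  moreover have "1 / (1 - z) - 1 \<le> 1" using z0 z1 by (simp add: field_simps)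
  moreover have "ln (1 / (1 - z)) = - ln (1 - z)" using z1 by (simp add: ln_div)
  ultimately show ?thesis by linarith
qed

theorem mainTheorem3:
  shows "(\<forall>x::real. x \<notin> \<rat> \<and> 0 < x \<and> x < 1/2 \<and> Bfun x < \<infinity> \<longrightarrow>
            Bfun (-x) < \<infinity> \<and> Bminus x = x / 2 * ln ((1 - x) / x))
       \<and> (\<forall>x::real. x \<notin> \<rat> \<and> 0 < x \<and> x < 1/2 \<and> W_converges x \<longrightarrow>
            W_converges (-x) \<and> Wplus x = x / 2 * ln ((1 - x) / x) - ln (1 - x))
       \<and> (\<exists>C::real. \<forall>x::real. x \<notin> \<rat> \<and> Bfun x < \<infinity> \<and> Bfun (-x) < \<infinity> \<longrightarrow>
            \<bar>Bminus x\<bar> \<le> C)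
       \<and> (\<exists>C::real. \<forall>x::real. x \<notin> \<rat> \<and> W_converges x \<and> W_converges (-x) \<longrightarrow>
            \<bar>Wplus x\<bar> \<le> C)"
proof (intro conjI)
  show "\<forall>x::real. x \<notin> \<rat> \<and> 0 < x \<and> x < 1/2 \<and> Bfun x < \<infinity> \<longrightarrow>
            Bfun (-x) < \<infinity> \<and> Bminus x = x / 2 * ln ((1 - x) / x)"
    using partA by blast
  show "\<forall>x::real. x \<notin> \<rat> \<and> 0 < x \<and> x < 1/2 \<and> W_converges x \<longrightarrow>
            W_converges (-x) \<and> Wplus x = x / 2 * ln ((1 - x) / x) - ln (1 - x)"
    using partB by blast
  show "\<exists>C::real. \<forall>x::real. x \<notin> \<rat> \<and> Bfun x < \<infinity> \<and> Bfun (-x) < \<infinity> \<longrightarrow>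
            \<bar>Bminus x\<bar> \<le> C"
  proof (intro exI allI impI)
    fix x :: real
    assume h: "x \<notin> \<rat> \<and> Bfun x < \<infinity> \<and> Bfun (-x) < \<infinity>"
    define y where "y = frac x"
    have y: "0 < y" "y < 1" "y \<noteq> 1/2" "frac (-x) = 1 - y"
      using frac_irr[of x] h frac_lt_1[of x] frac_neg[of x] unfolding y_def by auto
    show "\<bar>Bminus x\<bar> \<le> 1"
    proof (cases "y < 1/2")
      case True
      have e1: "Bfun x = Bfun y" by (rule Bfun_frac) (simp add: y_def)
      have e2: "Bfun (-x) = Bfun (-y)" by (rule Bfun_frac) (simp add: y fracnx[OF \<open>0 < y\<close> True])
      have "Bminus x = Bminus y" unfolding Bminus_def e1 e2 ..
      also have "\<dots> = y / 2 * ln ((1 - y) / y)" using partA[OF \<open>0 < y\<close> True] h e1 by simp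
      finally show ?thesis using bound1[OF \<open>0 < y\<close> True] by simp
    next
      case False
      define z where "z = 1 - y"
      have z: "0 < z" "z < 1/2" using y False unfolding z_def by auto
      have e1: "Bfun x = Bfun (-z)" by (rule Bfun_frac) (simp add: fracnx[OF z] z_def y_def frac_def)
      have e2: "Bfun (-x) = Bfun z" by (rule Bfun_frac) (use z in \<open>simp add: y frac_eq z_def[symmetric]\<close>)
      have "Bminus x = - Bminus z" unfolding Bminus_def e1 e2 by (simp add: field_simps)
      also have "\<dots> = - (z / 2 * ln ((1 - z) / z))" using partA[OF z] h e2 by simp
      finally show ?thesis using bound1[OF z] by simp
    qed
  qed
  show "\<exists>C::real. \<forall>x::real. x \<notin> \<rat> \<and> W_converges x \<and> W_converges (-x) \<longrightarrow>
            \<bar>Wplus x\<bar> \<le> C"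
  proof (intro exI allI impI)
    fix x :: real
    assume h: "x \<notin> \<rat> \<and> W_converges x \<and> W_converges (-x)"
    define y where "y = frac x"
    have y: "0 < y" "y < 1" "y \<noteq> 1/2" "frac (-x) = 1 - y"
      using frac_irr[of x] h frac_lt_1[of x] frac_neg[of x] unfolding y_def by auto
    show "\<bar>Wplus x\<bar> \<le> 2"
    proof (cases "y < 1/2")
      case True
      have f1: "frac x = frac y" by (simp add: y_def)
      have f2: "frac (-x) = frac (-y)" by (simp add: y fracnx[OF \<open>0 < y\<close> True])
      have "Wplus x = Wplus y" unfolding Wplus_def Wfun_frac[OF f1] Wfun_frac[OF f2] ..
      also have "\<dots> = y / 2 * ln ((1 - y) / y) - ln (1 - y)" using partB[OF \<open>0 < y\<close> True] h Wc_frac[OF f1] by simp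
      finally show ?thesis using bound1[OF \<open>0 < y\<close> True] bound2[OF \<open>0 < y\<close> True] by simp
    next
      case False
      define z where "z = 1 - y"
      have z: "0 < z" "z < 1/2" using y False unfolding z_def by auto
      have f1: "frac x = frac (-z)" by (simp add: fracnx[OF z] z_def y_def frac_def)
      have f2: "frac (-x) = frac z" by (use z in \<open>simp add: y frac_eq z_def[symmetric]\<close>)
      have "Wplus x = Wplus z" unfolding Wplus_def Wfun_frac[OF f1] Wfun_frac[OF f2] by simp
      also have "\<dots> = z / 2 * ln ((1 - z) / z) - ln (1 - z)" using partB[OF z] h Wc_frac[OF f2] by simp
      finally show ?thesis using bound1[OF z] bound2[OF z] by simp
    qed
  qed
qed

end
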